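(* Let $n\ge1$ be odd, $\varepsilon\ge0$, $U$ a unitary on a finite-dimensional Hilbert space, $\widetilde\Pi,\Pi$ orthogonal projectors, and $W\colon\mathrm{img}\,\Pi\to\mathrm{img}\,\widetilde\Pi$ an isometry such that for all unit vectors $|\psi\rangle\in\mathrm{img}\,\Pi$ $$\left\|\sin\left(\tfrac{\pi}{2n}\right)W|\psi\rangle-\widetilde\Pi U|\psi\rangle\right\|\le\varepsilon.$$ Then there exist $\Phi\in\mathbb{R}^n$ and a sign $s\in\{+1,-1\}$ such that $\tilde U:=s\,U_\Phi$ satisfies, for all unit vectors $|\psi\rangle\in\mathrm{img}\,\Pi$, $$\left\|W|\psi\rangle-\widetilde\Pi\tilde U|\psi\rangle\right\|\le 2n\varepsilon.$$
   Context: For odd $n$ and $\Phi=(\phi_1,\ldots,\phi_n)$: $U_\Phi:=e^{i\phi_1(2\widetilde\Pi-I)}U\prod_{j=1}^{(n-1)/2}\left(e^{i\phi_{2j}(2\Pi-I)}U^\dagger e^{i\phi_{2j+1}(2\widetilde\Pi-I)}U\right)$ (product written left to right). *)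

theory Defs
  imports "HOL-Analysis.Analysis"
begin

text \<open>Finite-dimensional Hilbert space: complex^'n with the Euclidean norm;
operators: complex matrices complex^'n^'n.\<close>

type_synonym 'n cmat = "complex^'n^'n"

definition cadj :: "'n::finite cmat \<Rightarrow> 'n cmat" where
  "cadj A = (\<chi> i j. cnj (A $ j $ i))"

definition csmult :: "complex \<Rightarrow> 'n::finite cmat \<Rightarrow> 'n cmat" where
  "csmult c A = (\<chi> i j. c * A $ i $ j)"

definition unitary :: "'n::finite cmat \<Rightarrow> bool" where
  "unitary U \<longleftrightarrow> cadj U ** U = mat 1 \<and> U ** cadj U = mat 1"

definition orth_proj :: "'n::finite cmat \<Rightarrow> bool" where
  "orth_proj P \<longleftrightarrow> P ** P = P \<and> cadj P = P"

definition img :: "'n::finite cmat \<Rightarrow> (complex^'n) set" where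
  "img P = range (\<lambda>x. P *v x)"

definition mpow :: "'n::finite cmat \<Rightarrow> nat \<Rightarrow> 'n cmat" where
  "mpow A k = ((\<lambda>B. A ** B) ^^ k) (mat 1)"

text \<open>Matrix exponential as the exponential power series.\<close>
definition mexp :: "'n::finite cmat \<Rightarrow> 'n cmat" where
  "mexp A = (\<Sum>k. (1 / fact k) *\<^sub>R mpow A k)"

text \<open>e^{i phi (2P - I)}\<close>
definition refl_phase :: "real \<Rightarrow> 'n::finite cmat \<Rightarrow> 'n cmat" where
  "refl_phase \<phi> P = mexp (csmult (\<i> * complex_of_real \<phi>) (2 *\<^sub>R P - mat 1))"

text \<open>Partial product: e^{i phi_1 (2Pt-I)} U times the first m factors
  (e^{i phi_{2j}(2P-I)} U^dagger e^{i phi_{2j+1}(2Pt-I)} U), j = 1..m, left to right.\<close>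
fun Uphi_aux :: "'n::finite cmat \<Rightarrow> 'n cmat \<Rightarrow> 'n cmat \<Rightarrow> (nat \<Rightarrow> real) \<Rightarrow> nat \<Rightarrow> 'n cmat" where
  "Uphi_aux Pt P U \<phi> 0 = refl_phase (\<phi> 1) Pt ** U"
| "Uphi_aux Pt P U \<phi> (Suc m) = Uphi_aux Pt P U \<phi> m **
     (refl_phase (\<phi> (2 * Suc m)) P ** cadj U ** refl_phase (\<phi> (2 * Suc m + 1)) Pt ** U)"

text \<open>U_Phi for odd n, with Phi = (phi 1, ..., phi n).\<close>
definition Uphi :: "'n::finite cmat \<Rightarrow> 'n cmat \<Rightarrow> 'n cmat \<Rightarrow> nat \<Rightarrow> (nat \<Rightarrow> real) \<Rightarrow> 'n cmat" where
  "Uphi Pt P U n \<phi> = Uphi_aux Pt P U \<phi> ((n - 1) div 2)"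

end

theory Submission
  imports Defs
begin

lemma csmult_mult: "csmult c (A::'n::finite cmat) ** csmult d B = csmult (c*d) (A ** B)"
  by (simp add: csmult_def matrix_matrix_mult_def vec_eq_iff sum_distrib_left mult_ac)

lemma csmult_add: "csmult (a + b) (X::'n::finite cmat) = csmult a X + csmult b X"
  by (simp add: csmult_def vec_eq_iff distrib_right)

lemma csmult_scaleR: "r *\<^sub>R csmult z (X::'n::finite cmat) = csmult (r *\<^sub>R z) X"
  by (simp add: csmult_def vec_eq_iff)

lemma csmult_zero[simp]: "csmult 0 (X::'n::finite cmat) = 0"
  by (simp add: csmult_def vec_eq_iff)

lemma csmult_one[simp]: "csmult 1 (X::'n::finite cmat) = X"
  by (simp add: csmult_def vec_eq_iff)

lemma mpow_Suc: "mpow A (Suc k) = A ** mpow A k"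
  by (simp add: mpow_def)

lemma mpow_0: "mpow A 0 = mat 1"
  by (simp add: mpow_def)

lemma mpow_csmult: "mpow (csmult c (A::'n::finite cmat)) k = csmult (c^k) (mpow A k)"
proof (induction k)
  case 0 then show ?case by (simp add: mpow_0)
next
  case (Suc k) then show ?case by (simp add: mpow_Suc csmult_mult)
qed

lemma mpow_invol: assumes "A ** A = (mat 1::'n::finite cmat)"
  shows "mpow A k = (if even k then mat 1 else A)"
proof (induction k)
  case 0 then show ?case by (simp add: mpow_0)
next
  case (Suc k) then show ?case using assms by (simp add: mpow_Suc)
qed

lemma bl_csmult: "bounded_linear (\<lambda>z. csmult z (B::'n::finite cmat))"
proof -
  have "linear (\<lambda>z. csmult z B)"
    by (rule linearI) (simp_all add: csmult_add csmult_scaleR)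
  then show ?thesis using linear_conv_bounded_linear by blast
qed

lemma mexp_invol: assumes "A ** A = (mat 1::'n::finite cmat)"
  shows "mexp (csmult c A) = csmult ((exp c + exp (-c))/2) (mat 1) + csmult ((exp c - exp (-c))/2) A"
proof -
  have trm: "(1 / fact k) *\<^sub>R mpow (csmult c A) k =
     csmult (((c^k + (-c)^k)/2) /\<^sub>R fact k) (mat 1) + csmult (((c^k - (-c)^k)/2) /\<^sub>R fact k) A" for k
  proof (cases "even k")
    case True
    then have "(-c)^k = c^k" by (simp add: power_minus_even)
    then show ?thesis using True
      by (simp add: mpow_csmult mpow_invol[OF assms] csmult_scaleR inverse_eq_divide)
  next
    case False
    then have "(-c)^k = -(c^k)" by (simp add: power_minus_odd)
    then show ?thesis using False
      by (simp add: mpow_csmult mpow_invol[OF assms] csmult_scaleR inverse_eq_divide)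
  qed
  have s1: "(\<lambda>k. ((c^k + (-c)^k)/2) /\<^sub>R fact k) sums ((exp c + exp (-c))/2)"
    using sums_divide[OF sums_add[OF exp_converges[of c] exp_converges[of "-c"]], of 2]
    by (simp add: scaleR_add_right add_divide_distrib scaleR_conv_of_real distrib_left)
  have s2: "(\<lambda>k. ((c^k - (-c)^k)/2) /\<^sub>R fact k) sums ((exp c - exp (-c))/2)"
    using sums_divide[OF sums_diff[OF exp_converges[of c] exp_converges[of "-c"]], of 2]
    by (simp add: scaleR_diff_right diff_divide_distrib scaleR_conv_of_real right_diff_distrib)
  have "(\<lambda>k. (1 / fact k) *\<^sub>R mpow (csmult c A) k) sums
     (csmult ((exp c + exp (-c))/2) (mat 1) + csmult ((exp c - exp (-c))/2) A)"
    unfolding trm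
    by (rule sums_add[OF bounded_linear.sums[OF bl_csmult s1] bounded_linear.sums[OF bl_csmult s2]])
  then show ?thesis unfolding mexp_def by (rule sums_unique[symmetric])
qed

lemma mexp_zero: "mexp (0::'n::finite cmat) = mat 1"
proof -
  have "(\<lambda>k. (1 / fact k) *\<^sub>R mpow (0::'n cmat) k) = (\<lambda>k. if k = 0 then mat 1 else 0)"
  proof
    fix k show "(1 / fact k) *\<^sub>R mpow (0::'n cmat) k = (if k = 0 then mat 1 else 0)"
      by (cases k) (simp_all add: mpow_0 mpow_Suc)
  qed
  then show ?thesis unfolding mexp_def using sums_single[of 0 "\<lambda>_. mat 1 :: 'n cmat"]
    by (simp add: sums_iff)
qed

lemma mv_scaleR: "(A::'n::finite cmat) *v (r *\<^sub>R x) = r *\<^sub>R (A *v x)"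
  by (simp add: matrix_vector_mult_def vec_eq_iff scaleR_sum_right)

lemma csmult_mv: "csmult c (A::'n::finite cmat) *v x = c *s (A *v x)"
  by (simp add: csmult_def matrix_vector_mult_def vec_eq_iff sum_distrib_left mult.assoc)

lemma scaleR_mv: "(r *\<^sub>R (A::'n::finite cmat)) *v x = r *\<^sub>R (A *v x)"
  by (simp add: matrix_vector_mult_def vec_eq_iff scaleR_sum_right)

lemma inner_vec_sum: "(x::complex^'n::finite) \<bullet> y = (\<Sum>i\<in>UNIV. Re (x$i * cnj (y$i)))"
  by (simp add: inner_vec_def inner_complex_def)

lemma adj_inner: "((A::'n::finite cmat) *v x) \<bullet> y = x \<bullet> (cadj A *v y)"
proof -
  have "((A *v x) \<bullet> y) = Re (\<Sum>i\<in>UNIV. \<Sum>j\<in>UNIV. A$i$j * x$j * cnj (y$i))"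
    by (simp add: inner_vec_sum matrix_vector_mult_def sum_distrib_right)
  also have "\<dots> = Re (\<Sum>j\<in>UNIV. \<Sum>i\<in>UNIV. A$i$j * x$j * cnj (y$i))"
    by (subst sum.swap) simp
  also have "\<dots> = x \<bullet> (cadj A *v y)"
    by (simp add: inner_vec_sum matrix_vector_mult_def cadj_def sum_distrib_left mult_ac)
  finally show ?thesis .
qed

lemma mv_cs: "(A::'n::finite cmat) *v (c *s x) = c *s (A *v x)"
  by (simp add: matrix_vector_mult_def vec_eq_iff sum_distrib_left mult_ac)

lemma proj_idem: "orth_proj P \<Longrightarrow> P *v (P *v x) = P *v x"
  by (simp add: orth_proj_def matrix_vector_mul_assoc)

lemma proj_inner: assumes "orth_proj P" shows "(P *v x) \<bullet> y = x \<bullet> (P *v y)"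
  using adj_inner[of P x y] assms by (simp add: orth_proj_def)

lemma proj_inner2: assumes "orth_proj P" shows "(P *v x) \<bullet> x = (P *v x) \<bullet> (P *v x)"
  using proj_inner[OF assms, of "P *v x" x] proj_idem[OF assms] by (simp add: inner_commute)

lemma refl_isom: assumes "orth_proj P" shows "norm (2 *\<^sub>R (P *v x) - x) = norm x"
proof -
  have h: "(P *v x) \<bullet> x = (P *v x) \<bullet> (P *v x)" using proj_inner2[OF assms] .
  have "(norm (2 *\<^sub>R (P *v x) - x))^2 = (2 *\<^sub>R (P *v x) - x) \<bullet> (2 *\<^sub>R (P *v x) - x)"
    by (simp add: power2_norm_eq_inner)
  also have "\<dots> = 4 * ((P *v x) \<bullet> (P *v x)) - 4 * ((P *v x) \<bullet> x) + x \<bullet> x"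
    by (simp add: inner_diff_left inner_diff_right inner_commute[of x "P *v x"])
  also have "\<dots> = (norm x)^2" using h by (simp add: power2_norm_eq_inner)
  finally have "(norm (2 *\<^sub>R (P *v x) - x))^2 = (norm x)^2" .
  then show ?thesis by (simp add: power2_eq_iff_nonneg)
qed

lemma proj_norm_le: assumes "orth_proj P" shows "norm (P *v x) \<le> norm x"
proof -
  have h: "(P *v x) \<bullet> x = (P *v x) \<bullet> (P *v x)" using proj_inner2[OF assms] .
  have "0 \<le> (x - P *v x) \<bullet> (x - P *v x)" by simp
  also have "\<dots> = x \<bullet> x - 2 * ((P *v x) \<bullet> x) + (P *v x) \<bullet> (P *v x)"
    by (simp add: inner_diff_left inner_diff_right inner_commute[of x "P *v x"])
  finally have "(norm (P *v x))^2 \<le> (norm x)^2" using h by (simp add: power2_norm_eq_inner)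
  then show ?thesis by (rule power2_le_imp_le) simp
qed

lemma unitary_inv1: "unitary U \<Longrightarrow> U *v (cadj U *v x) = x"
  by (simp add: unitary_def matrix_vector_mul_assoc)
lemma unitary_inv2: "unitary U \<Longrightarrow> cadj U *v (U *v x) = x"
  by (simp add: unitary_def matrix_vector_mul_assoc)

lemma unitary_isom1: assumes "unitary U" shows "norm (U *v x) = norm x"
proof -
  have "(norm (U *v x))^2 = (norm x)^2"
    using adj_inner[of U x "U *v x"] unitary_inv2[OF assms] by (simp add: power2_norm_eq_inner)
  then show ?thesis by (simp add: power2_eq_iff_nonneg)
qed

lemma unitary_adj: "unitary U \<Longrightarrow> unitary (cadj U)"
proof -
  have "cadj (cadj U) = U" by (simp add: cadj_def vec_eq_iff)
  then show "unitary U \<Longrightarrow> unitary (cadj U)" by (simp add: unitary_def)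
qed

lemma unitary_isom2: "unitary U \<Longrightarrow> norm (cadj U *v x) = norm x"
  using unitary_isom1 unitary_adj by blast

lemma reflmat_sq: assumes "orth_proj P"
  shows "(2 *\<^sub>R P - mat 1) ** (2 *\<^sub>R P - mat 1) = (mat 1 :: 'n::finite cmat)"
  unfolding matrix_eq
proof
  fix x
  have "(2 *\<^sub>R P - mat 1) ** (2 *\<^sub>R P - mat 1) *v x = (2 *\<^sub>R P - mat 1) *v ((2 *\<^sub>R P - mat 1) *v x)"
    by (simp add: matrix_vector_mul_assoc)
  also have "\<dots> = x"
    using proj_idem[OF assms, of x]
    by (simp add: matrix_vector_mult_diff_rdistrib scaleR_mv matrix_vector_mult_diff_distrib mv_scaleR scaleR_diff_right)
  finally show "(2 *\<^sub>R P - mat 1) ** (2 *\<^sub>R P - mat 1) *v x = mat 1 *v x" by simp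
qed

lemma refl_phase_0: "refl_phase 0 P = (mat 1 :: 'n::finite cmat)"
  by (simp add: refl_phase_def mexp_zero)

lemma refl_phase_half: assumes "orth_proj P"
  shows "refl_phase (pi/2) P = csmult \<i> (2 *\<^sub>R P - mat 1 :: 'n::finite cmat)"
proof -
  have e1: "exp (\<i> * complex_of_real (pi/2)) = \<i>" using cis_conv_exp[of "pi/2"] by simp
  have e2: "exp (- (\<i> * complex_of_real (pi/2))) = - \<i>"
    using e1 exp_minus[of "\<i> * complex_of_real (pi/2)"] by simp
  show ?thesis unfolding refl_phase_def mexp_invol[OF reflmat_sq[OF assms]] e1 e2 by simp
qed

lemma refl_half_mv: assumes "orth_proj P"
  shows "refl_phase (pi/2) P *v x = \<i> *s (2 *\<^sub>R (P *v x) - (x :: complex^'n::finite))"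
  by (simp add: refl_phase_half[OF assms] csmult_mv matrix_vector_mult_diff_rdistrib scaleR_mv)


definition Rf :: "'n::finite cmat \<Rightarrow> complex^'n \<Rightarrow> complex^'n" where
  "Rf P x = 2 *\<^sub>R (P *v x) - x"

lemma Rf_cs: "Rf P (c *s x) = c *s Rf P x"
  by (simp add: Rf_def mv_cs vec_eq_iff algebra_simps)

definition Gm :: "'n::finite cmat \<Rightarrow> 'n cmat \<Rightarrow> 'n cmat \<Rightarrow> 'n cmat" where
  "Gm Pt P U = refl_phase (pi/2) P ** cadj U ** refl_phase (pi/2) Pt ** U"

lemma Gm_mv: assumes "orth_proj Pt" "orth_proj P"
  shows "Gm Pt P U *v x = - Rf P (cadj U *v Rf Pt (U *v x))"
proof -
  have "Gm Pt P U *v x = refl_phase (pi/2) P *v (cadj U *v (refl_phase (pi/2) Pt *v (U *v x)))"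
    by (simp add: Gm_def matrix_vector_mul_assoc[symmetric])
  also have "\<dots> = \<i> *s Rf P (cadj U *v (\<i> *s Rf Pt (U *v x)))"
    by (simp add: refl_half_mv[OF assms(1)] refl_half_mv[OF assms(2)] Rf_def)
  also have "\<dots> = (\<i> * \<i>) *s Rf P (cadj U *v Rf Pt (U *v x))"
    by (simp add: mv_cs Rf_cs vector_smult_assoc)
  also have "\<dots> = - Rf P (cadj U *v Rf Pt (U *v x))"
    by (simp add: vec_eq_iff)
  finally show ?thesis .
qed

lemma Uphi_aux_mv: assumes "orth_proj Pt" "orth_proj P"
  shows "Uphi_aux Pt P U (\<lambda>j. if j = 1 then 0 else pi/2) m *v x = U *v (((*v) (Gm Pt P U)) ^^ m) x"
proof (induction m arbitrary: x)
  case 0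
  then show ?case by (simp add: refl_phase_0 matrix_vector_mul_assoc[symmetric])
next
  case (Suc m)
  have "Uphi_aux Pt P U (\<lambda>j. if j = 1 then 0 else pi/2) (Suc m) =
        Uphi_aux Pt P U (\<lambda>j. if j = 1 then 0 else pi/2) m ** Gm Pt P U"
    by (simp add: Gm_def)
  then show ?case using Suc by (simp add: matrix_vector_mul_assoc[symmetric] funpow_swap1)
qed


lemma trig_rec1:
  fixes u t :: real
  shows "cos (u + 2*t) = - ((4 * sin t ^ 2 - 1) * cos u + 2 * sin t * sin (u - t))"
proof -
  have "cos (u + 2*t) = cos u * cos (2*t) - sin u * sin (2*t)" by (simp add: cos_add)
  also have "\<dots> = cos u * (1 - 2 * sin t ^ 2) - sin u * (2 * sin t * cos t)"
    by (simp add: cos_double_sin sin_double)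
  also have "\<dots> = - ((4 * sin t ^ 2 - 1) * cos u + 2 * sin t * (sin u * cos t - cos u * sin t))"
    by (simp add: algebra_simps power2_eq_square)
  also have "\<dots> = - ((4 * sin t ^ 2 - 1) * cos u + 2 * sin t * sin (u - t))"
    by (simp add: sin_diff)
  finally show ?thesis .
qed

lemma trig_rec2:
  fixes u t :: real
  shows "sin (u + t) = 2 * sin t * cos u + sin (u - t)"
  by (simp add: sin_add sin_diff algebra_simps)

lemma trig_bound:
  fixes u t :: real
  assumes c: "cos t > 0" and s0: "0 \<le> sin t" and s1: "sin t \<le> 1/2"
  shows "2 * \<bar>cos u\<bar> + \<bar>4 * cos u * sin t + 2 * sin (u - t)\<bar> \<le> 4 * cos t"
proof -
  define X where "X = \<bar>cos u\<bar>"
  define Y where "Y = \<bar>sin u\<bar>"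
  define s where "s = sin t"
  define c where "c = cos t"
  have XY: "X^2 + Y^2 = 1" unfolding X_def Y_def by simp
  have sc: "s^2 + c^2 = 1" unfolding s_def c_def by simp
  have X0: "X \<ge> 0" and Y0: "Y \<ge> 0" unfolding X_def Y_def by auto
  have e: "4 * cos u * sin t + 2 * sin (u - t) = 2 * (cos u * s + sin u * c)"
    by (simp add: sin_diff s_def c_def algebra_simps)
  have "\<bar>cos u * s + sin u * c\<bar> \<le> X * s + Y * c"
    unfolding X_def Y_def using s0 c
    by (metis abs_mult abs_of_nonneg abs_triangle_ineq c_def less_imp_le s_def)
  then have h1: "2 * \<bar>cos u\<bar> + \<bar>4 * cos u * sin t + 2 * sin (u - t)\<bar> \<le> 2 * (X * (1 + s) + Y * c)"
    unfolding e by (simp add: X_def algebra_simps)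
  have "(X * (1 + s) + Y * c)^2 \<le> (X^2 + Y^2) * ((1+s)^2 + c^2)"
  proof -
    have "0 \<le> (X * c - Y * (1+s))^2" by simp
    then show ?thesis by (simp add: power2_eq_square algebra_simps)
  qed
  also have "\<dots> = 2 + 2 * s" using XY sc by (simp add: power2_eq_square algebra_simps)
  also have "\<dots> \<le> (2 * c)^2"
  proof -
    have "(2 * s - 1) * (2 * s + 2) \<le> 0"
      using s0 s1 unfolding s_def by (intro mult_nonpos_nonneg) auto
    then show ?thesis using sc by (simp add: power2_eq_square algebra_simps)
  qed
  finally have "X * (1 + s) + Y * c \<le> 2 * c"
    by (rule power2_le_imp_le) (use c in \<open>simp add: c_def\<close>)
  with h1 show ?thesis by (simp add: c_def)
qed


lemma Rf_add: "Rf P (x + y) = Rf P x + Rf P y"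
  by (simp add: Rf_def matrix_vector_right_distrib algebra_simps)
lemma Rf_diff: "Rf P (x - y) = Rf P x - Rf P y"
  by (simp add: Rf_def matrix_vector_mult_diff_distrib algebra_simps)
lemma Rf_scaleR: "Rf P (r *\<^sub>R x) = r *\<^sub>R Rf P x"
  by (simp add: Rf_def mv_scaleR algebra_simps)

lemma lincomb: fixes R Py y \<psi> :: "'a::real_vector"
 shows "- (\<alpha> *\<^sub>R (2 *\<^sub>R R - \<psi>) + \<beta> *\<^sub>R (2 *\<^sub>R Py - y)) - ((- ((4 * s^2 - 1) * \<alpha> + 2 * s * \<beta>)) *\<^sub>R \<psi> + (2 * s * \<alpha> + \<beta>) *\<^sub>R y)
   = - (2 * \<alpha>) *\<^sub>R (R - s *\<^sub>R (2 *\<^sub>R Py - y)) - (4 * \<alpha> * s + 2 * \<beta>) *\<^sub>R (Py - s *\<^sub>R \<psi>)"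
  by (simp add: algebra_simps power2_eq_square)

lemma step_identity:
  assumes Pt: "orth_proj Pt" and P: "orth_proj P" and U: "unitary U"
    and hpsi: "P *v \<psi> = \<psi>" and hb: "Pt *v b = b" and hy: "y = cadj U *v b"
    and hq: "q = cadj U *v (Pt *v (U *v \<psi>))"
  shows "Gm Pt P U *v (\<alpha> *\<^sub>R \<psi> + \<beta> *\<^sub>R y)
     - ((- ((4* s^2-1)*\<alpha> + 2 * s * \<beta>)) *\<^sub>R \<psi> + (2 * s * \<alpha>+\<beta>) *\<^sub>R y)
     = - (2*\<alpha>) *\<^sub>R Rf P (q - s *\<^sub>R y) - (4*\<alpha>* s + 2*\<beta>) *\<^sub>R (P *v y - s *\<^sub>R \<psi>)"
proof -
  have Uy: "U *v y = b" using hy unitary_inv1[OF U] by simp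
  have e1: "U *v (\<alpha> *\<^sub>R \<psi> + \<beta> *\<^sub>R y) = \<alpha> *\<^sub>R (U *v \<psi>) + \<beta> *\<^sub>R b"
    by (simp add: matrix_vector_right_distrib mv_scaleR Uy)
  have e2: "Rf Pt (\<alpha> *\<^sub>R (U *v \<psi>) + \<beta> *\<^sub>R b) = \<alpha> *\<^sub>R (2 *\<^sub>R (Pt *v (U *v \<psi>)) - U *v \<psi>) + \<beta> *\<^sub>R b"
  proof -
    have "Rf Pt b = b" unfolding Rf_def hb by (simp add: scaleR_2)
    then show ?thesis by (simp add: Rf_add Rf_scaleR Rf_def[of Pt "U *v \<psi>"])
  qed
  have e3: "cadj U *v (\<alpha> *\<^sub>R (2 *\<^sub>R (Pt *v (U *v \<psi>)) - U *v \<psi>) + \<beta> *\<^sub>R b)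
      = \<alpha> *\<^sub>R (2 *\<^sub>R q - \<psi>) + \<beta> *\<^sub>R y"
    by (simp add: matrix_vector_right_distrib mv_scaleR matrix_vector_mult_diff_distrib
        hq hy unitary_inv2[OF U])
  have e4: "Rf P (\<alpha> *\<^sub>R (2 *\<^sub>R q - \<psi>) + \<beta> *\<^sub>R y)
     = \<alpha> *\<^sub>R (2 *\<^sub>R Rf P q - \<psi>) + \<beta> *\<^sub>R Rf P y"
  proof -
    have "Rf P \<psi> = \<psi>" unfolding Rf_def hpsi by (simp add: scaleR_2)
    then show ?thesis by (simp add: Rf_add Rf_scaleR Rf_diff)
  qed
  have Gq: "Gm Pt P U *v (\<alpha> *\<^sub>R \<psi> + \<beta> *\<^sub>R y) = - (\<alpha> *\<^sub>R (2 *\<^sub>R Rf P q - \<psi>) + \<beta> *\<^sub>R Rf P y)"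
    by (simp add: Gm_mv[OF Pt P] e1 e2 e3 e4)
  have Ry: "Rf P y = 2 *\<^sub>R (P *v y) - y" by (simp add: Rf_def)
  have Rq: "Rf P (q - s *\<^sub>R y) = Rf P q - s *\<^sub>R (2 *\<^sub>R (P *v y) - y)"
    by (simp add: Rf_diff Rf_scaleR Ry)
  show ?thesis
    by (subst Gq, subst Rq, subst Ry, rule lincomb)
qed


lemma img_iff: assumes "orth_proj P" shows "v \<in> img P \<longleftrightarrow> P *v v = v"
proof
  assume "v \<in> img P" then obtain x where "v = P *v x" unfolding img_def by auto
  then show "P *v v = v" using proj_idem[OF assms] by simp
next
  assume "P *v v = v" then show "v \<in> img P" unfolding img_def by (metis rangeI)
qed

lemma isom_inner:
  assumes iso: "\<forall>\<psi>\<in>img P. norm (W *v \<psi>) = norm \<psi>" and P: "orth_proj P"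
    and v: "v \<in> img P" and w: "w \<in> img P"
  shows "(W *v v) \<bullet> (W *v w) = v \<bullet> w"
proof -
  have vw: "v + w \<in> img P" using v w img_iff[OF P] by (simp add: matrix_vector_right_distrib)
  have "(W *v v) \<bullet> (W *v w) = ((norm (W *v v + W *v w))\<^sup>2 - (norm (W *v v))\<^sup>2 - (norm (W *v w))\<^sup>2) / 2"
    by (rule dot_norm)
  also have "\<dots> = ((norm (v + w))\<^sup>2 - (norm v)\<^sup>2 - (norm w)\<^sup>2) / 2"
    using iso v w vw by (simp add: matrix_vector_right_distrib[symmetric])
  also have "\<dots> = v \<bullet> w" by (rule dot_norm[symmetric])
  finally show ?thesis .
qed

lemma Rf_isom: "orth_proj P \<Longrightarrow> norm (Rf P x) = norm x"
  unfolding Rf_def by (rule refl_isom)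

lemma Gm_isom: assumes "orth_proj Pt" "orth_proj P" "unitary U"
  shows "norm (Gm Pt P U *v x) = norm x"
  using assms by (simp add: Gm_mv Rf_isom unitary_isom1 unitary_isom2)


theorem mainTheorem13:
  fixes n :: nat and \<epsilon> :: real
    and U Pt P W :: "'n::finite cmat"
  assumes "odd n" and "\<epsilon> \<ge> 0"
    and "unitary U" and "orth_proj Pt" and "orth_proj P"
    and W_maps: "\<forall>\<psi>\<in>img P. W *v \<psi> \<in> img Pt"
    and W_isom: "\<forall>\<psi>\<in>img P. norm (W *v \<psi>) = norm \<psi>"
    and hyp: "\<forall>\<psi>\<in>img P. norm \<psi> = 1 \<longrightarrow>
               norm (sin (pi / (2 * real n)) *\<^sub>R (W *v \<psi>) - Pt *v (U *v \<psi>)) \<le> \<epsilon>"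
  shows "\<exists>(\<phi>::nat \<Rightarrow> real) (s::complex). s \<in> {1, -1} \<and>
           (\<forall>\<psi>\<in>img P. norm \<psi> = 1 \<longrightarrow>
              norm (W *v \<psi> - Pt *v (csmult s (Uphi Pt P U n \<phi>) *v \<psi>)) \<le> 2 * real n * \<epsilon>)"
proof -
  note U = assms(3) and Pt = assms(4) and P = assms(5) and eps = assms(2)
  obtain k where nk: "n = 2*k+1" using assms(1) oddE by blast
  define \<phi> :: "nat \<Rightarrow> real" where "\<phi> = (\<lambda>j. if j = 1 then 0 else pi/2)"
  define G where "G = Gm Pt P U"
  have Uphi_eq: "Uphi Pt P U n \<phi> *v x = U *v (((*v) G) ^^ k) x" for x
    unfolding Uphi_def \<phi>_def G_def using Uphi_aux_mv[OF Pt P] nk by simp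
  define \<theta> where "\<theta> = pi / (2 * real n)"
  define s where "s = sin \<theta>"
  define c where "c = cos \<theta>"
  have hypgen: "norm (s *\<^sub>R (W *v v) - Pt *v (U *v v)) \<le> \<epsilon> * norm v" if v: "v \<in> img P" for v
  proof (cases "v = 0")
    case True then show ?thesis by simp
  next
    case False
    define u where "u = (1 / norm v) *\<^sub>R v"
    have uP: "u \<in> img P" using v img_iff[OF P] by (simp add: u_def mv_scaleR)
    have nu: "norm u = 1" using False by (simp add: u_def)
    have "norm (s *\<^sub>R (W *v u) - Pt *v (U *v u)) \<le> \<epsilon>"
      using hyp uP nu by (simp add: s_def \<theta>_def)
    moreover have "s *\<^sub>R (W *v u) - Pt *v (U *v u) = (1 / norm v) *\<^sub>R (s *\<^sub>R (W *v v) - Pt *v (U *v v))"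
      by (simp add: u_def mv_scaleR scaleR_diff_right)
    ultimately have "(1 / norm v) * norm (s *\<^sub>R (W *v v) - Pt *v (U *v v)) \<le> \<epsilon>" by simp
    then show ?thesis using False by (simp add: field_simps)
  qed
  have Gisom: "norm (G *v x) = norm x" for x
    unfolding G_def using Gm_isom[OF Pt P U] .
  have goal: "norm (W *v \<psi> - Pt *v (U *v (((*v) G) ^^ k) \<psi>)) \<le> 2 * real n * \<epsilon>"
    if psiP: "\<psi> \<in> img P" and npsi: "norm \<psi> = 1" for \<psi>
  proof (cases "k = 0")
    case True
    then have n1: "n = 1" using nk by simp
    then have "s = 1" by (simp add: s_def \<theta>_def)
    then show ?thesis using hypgen[OF psiP] npsi eps True n1 by simp
  next
    case False
    then have n3: "real n \<ge> 3" using nk by simp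
    have th0: "0 < \<theta>" using n3 by (simp add: \<theta>_def)
    have th6: "\<theta> \<le> pi/6" unfolding \<theta>_def using n3 by (simp add: field_simps)
    have c0: "c > 0" unfolding c_def using th0 th6 by (intro cos_gt_zero_pi) auto
    have s0: "0 \<le> s" unfolding s_def using th0 th6 by (intro sin_ge_zero) auto
    have s1: "s \<le> 1/2" using sin_monotone_2pi_le[of \<theta> "pi/6"] sin_30 th0 th6 by (simp add: s_def)
    define b where "b = W *v \<psi>"
    define y where "y = cadj U *v b"
    define q where "q = cadj U *v (Pt *v (U *v \<psi>))"
    have hpsi: "P *v \<psi> = \<psi>" using psiP img_iff[OF P] by simp
    have hb: "Pt *v b = b" using W_maps psiP img_iff[OF Pt] by (simp add: b_def)
    have nb: "norm b = 1" using W_isom psiP npsi by (simp add: b_def)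
    have F1: "norm (q - s *\<^sub>R y) \<le> \<epsilon>"
    proof -
      have "q - s *\<^sub>R y = cadj U *v (Pt *v (U *v \<psi>) - s *\<^sub>R b)"
        by (simp add: q_def y_def matrix_vector_mult_diff_distrib mv_scaleR)
      then have "norm (q - s *\<^sub>R y) = norm (s *\<^sub>R b - Pt *v (U *v \<psi>))"
        by (simp add: unitary_isom2[OF U] norm_minus_commute)
      then show ?thesis using hypgen[OF psiP] npsi by (simp add: b_def)
    qed
    have F2: "norm (P *v y - s *\<^sub>R \<psi>) \<le> \<epsilon>"
    proof -
      define v where "v = P *v y - s *\<^sub>R \<psi>"
      have vP: "v \<in> img P" using img_iff[OF P] hpsi proj_idem[OF P]
        by (simp add: v_def matrix_vector_mult_diff_distrib mv_scaleR)
      have Pv: "P *v v = v" using vP img_iff[OF P] by simp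
      have i1: "v \<bullet> v = v \<bullet> (P *v y) - s * (v \<bullet> \<psi>)" by (simp add: v_def inner_diff_right)
      have i2: "v \<bullet> (P *v y) = (U *v v) \<bullet> b"
        using proj_inner[OF P, of v y] Pv adj_inner[of U v b] by (simp add: y_def)
      have i3: "(U *v v) \<bullet> b = (Pt *v (U *v v)) \<bullet> b" using proj_inner[OF Pt, of "U *v v" b] hb by simp
      have i4: "v \<bullet> \<psi> = (W *v v) \<bullet> b" using isom_inner[OF W_isom P vP psiP] by (simp add: b_def)
      have "v \<bullet> v = (Pt *v (U *v v) - s *\<^sub>R (W *v v)) \<bullet> b"
        using i1 i2 i3 i4 by (simp add: inner_diff_left)
      also have "\<dots> \<le> norm (Pt *v (U *v v) - s *\<^sub>R (W *v v)) * norm b" by (rule norm_cauchy_schwarz)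
      also have "\<dots> \<le> \<epsilon> * norm v" using hypgen[OF vP] nb by (simp add: norm_minus_commute)
      finally have "norm v * norm v \<le> \<epsilon> * norm v" by (simp add: norm_eq_sqrt_inner)
      then have "norm v \<le> \<epsilon>"
        using eps by (cases "norm v = 0") (auto simp: mult_le_cancel_right)
      then show ?thesis by (simp add: v_def)
    qed
    define u where "u = (\<lambda>j::nat. (2 * real j + 1) * \<theta>)"
    define a where "a = (\<lambda>j. cos (u j) / c)"
    define bb where "bb = (\<lambda>j. sin (u j - \<theta>) / c)"
    define z where "z = (\<lambda>j. a j *\<^sub>R \<psi> + bb j *\<^sub>R y)"
    have uS: "u (Suc j) = u j + 2*\<theta>" for j by (simp add: u_def algebra_simps)
    have uS2: "u (Suc j) - \<theta> = u j + \<theta>" for j by (simp add: u_def algebra_simps)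
    have recA: "a (Suc j) = - ((4 * s^2 - 1) * a j + 2 * s * bb j)" for j
    proof -
      have "a (Suc j) = cos (u j + 2*\<theta>) / c" by (simp add: a_def uS)
      also have "\<dots> = - ((4 * s^2 - 1) * cos (u j) + 2 * s * sin (u j - \<theta>)) / c"
        by (simp only: trig_rec1 s_def)
      also have "\<dots> = - ((4 * s^2 - 1) * a j + 2 * s * bb j)"
        using c0 by (simp add: a_def bb_def field_simps)
      finally show ?thesis .
    qed
    have recB: "bb (Suc j) = 2 * s * a j + bb j" for j
    proof -
      have "bb (Suc j) = sin (u j + \<theta>) / c" by (simp add: bb_def uS2)
      also have "\<dots> = (2 * s * cos (u j) + sin (u j - \<theta>)) / c"
        by (simp only: trig_rec2 s_def)
      also have "\<dots> = 2 * s * a j + bb j"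
        using c0 by (simp add: a_def bb_def field_simps)
      finally show ?thesis .
    qed
    have bnd: "2 * \<bar>a j\<bar> + \<bar>4 * a j * s + 2 * bb j\<bar> \<le> 4" for j
    proof -
      have e: "2 * \<bar>a j\<bar> + \<bar>4 * a j * s + 2 * bb j\<bar>
          = (2 * \<bar>cos (u j)\<bar> + \<bar>4 * cos (u j) * sin \<theta> + 2 * sin (u j - \<theta>)\<bar>) / c"
      proof -
        have h: "4 * a j * s + 2 * bb j = (4 * cos (u j) * sin \<theta> + 2 * sin (u j - \<theta>)) / c"
          using c0 by (simp add: a_def bb_def s_def field_simps)
        have h1: "\<bar>4 * a j * s + 2 * bb j\<bar> = \<bar>4 * cos (u j) * sin \<theta> + 2 * sin (u j - \<theta>)\<bar> / c"
          unfolding h abs_divide using c0 by simp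
        have h2: "\<bar>a j\<bar> = \<bar>cos (u j)\<bar> / c" using c0 by (simp add: a_def abs_divide)
        show ?thesis unfolding h1 h2 by (simp add: add_divide_distrib)
      qed
      have "2 * \<bar>cos (u j)\<bar> + \<bar>4 * cos (u j) * sin \<theta> + 2 * sin (u j - \<theta>)\<bar> \<le> 4 * cos \<theta>"
        using trig_bound[of \<theta> "u j"] c0 s0 s1 by (simp add: c_def s_def)
      then show ?thesis unfolding e using c0 by (simp add: c_def divide_le_eq)
    qed
    have step: "norm (G *v z j - z (Suc j)) \<le> 4 * \<epsilon>" for j
    proof -
      have "G *v z j - z (Suc j) = - (2 * a j) *\<^sub>R Rf P (q - s *\<^sub>R y) - (4 * a j * s + 2 * bb j) *\<^sub>R (P *v y - s *\<^sub>R \<psi>)"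
        unfolding z_def recA recB G_def by (rule step_identity[OF Pt P U hpsi hb y_def q_def])
      also have "norm \<dots> \<le> norm ((2 * a j) *\<^sub>R Rf P (q - s *\<^sub>R y)) + norm ((4 * a j * s + 2 * bb j) *\<^sub>R (P *v y - s *\<^sub>R \<psi>))"
        by (metis norm_minus_cancel norm_triangle_ineq4 scaleR_minus_left)
      also have "\<dots> = \<bar>2 * a j\<bar> * norm (q - s *\<^sub>R y) + \<bar>4 * a j * s + 2 * bb j\<bar> * norm (P *v y - s *\<^sub>R \<psi>)"
        by (simp add: Rf_isom[OF P])
      also have "\<dots> \<le> \<bar>2 * a j\<bar> * \<epsilon> + \<bar>4 * a j * s + 2 * bb j\<bar> * \<epsilon>"
        using F1 F2 by (intro add_mono mult_left_mono) auto
      also have "\<dots> = (2 * \<bar>a j\<bar> + \<bar>4 * a j * s + 2 * bb j\<bar>) * \<epsilon>" by (simp add: algebra_simps abs_mult)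
      also have "\<dots> \<le> 4 * \<epsilon>" using bnd[of j] eps by (intro mult_right_mono) auto
      finally show ?thesis .
    qed
    have ind: "norm ((((*v) G) ^^ j) \<psi> - z j) \<le> 4 * real j * \<epsilon>" for j
    proof (induction j)
      case 0
      have "z 0 = \<psi>" using c0 by (simp add: z_def a_def bb_def u_def c_def)
      then show ?case by simp
    next
      case (Suc j)
      define x where "x = (((*v) G) ^^ j) \<psi>"
      have eq: "(((*v) G) ^^ Suc j) \<psi> - z (Suc j) = G *v (x - z j) + (G *v z j - z (Suc j))"
        by (simp add: x_def matrix_vector_mult_diff_distrib)
      have "norm ((((*v) G) ^^ Suc j) \<psi> - z (Suc j)) \<le> norm (x - z j) + 4 * \<epsilon>"
        unfolding eq
        using step[of j] Gisom[of "x - z j"] norm_triangle_ineq[of "G *v (x - z j)" "G *v z j - z (Suc j)"]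
        by linarith
      then show ?case using Suc by (simp add: x_def algebra_simps)
    qed
    have ukpi: "u k = pi/2" unfolding u_def \<theta>_def using nk by (simp add: field_simps)
    have ak: "a k = 0" by (simp add: a_def ukpi)
    have bk: "bb k = 1" using c0 by (simp add: bb_def ukpi cos_sin_eq c_def)
    have Uy: "U *v y = b" using unitary_inv1[OF U] by (simp add: y_def)
    define x where "x = (((*v) G) ^^ k) \<psi>"
    have "W *v \<psi> - Pt *v (U *v x) = Pt *v (U *v (z k - x))"
      by (simp add: z_def ak bk Uy hb b_def[symmetric] matrix_vector_mult_diff_distrib)
    then have "norm (W *v \<psi> - Pt *v (U *v x)) \<le> norm (x - z k)"
      using proj_norm_le[OF Pt, of "U *v (z k - x)"] unitary_isom1[OF U, of "z k - x"]
      by (simp add: norm_minus_commute)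
    also have "\<dots> \<le> 4 * real k * \<epsilon>" using ind[of k] by (simp add: x_def)
    also have "\<dots> \<le> 2 * real n * \<epsilon>" using eps nk by (intro mult_right_mono) auto
    finally show ?thesis by (simp add: x_def)
  qed
  show ?thesis
  proof (intro exI[of _ \<phi>] exI[of _ "1::complex"] conjI ballI impI)
    show "(1::complex) \<in> {1, -1}" by simp
    fix \<psi> assume "\<psi> \<in> img P" "norm \<psi> = 1"
    then show "norm (W *v \<psi> - Pt *v (csmult 1 (Uphi Pt P U n \<phi>) *v \<psi>)) \<le> 2 * real n * \<epsilon>"
      using goal Uphi_eq by simp
  qed
qed


end
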